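(* For all $x\ge 1$ and $n\ge x$, the $(x,x)$ edge-removal process on $n$ vertices always results in an $(x,x)$ task-dependency graph.
   Context: A task-dependency graph is a finite directed acyclic graph (no loops, no multiple edges). A vertex is initial if it has in-degree $0$ and terminal if it has out-degree $0$ (an isolated vertex is both). An $(x,y)$ task-dependency graph has exactly $x$ initial and exactly $y$ terminal vertices. The $(x,y)$ edge-removal process on $n$ vertices: start with the maximally connected task-dependency graph on vertex set $\{1,\dots,n\}$, having all edges $(a,b)$ with $a<b$. Edges are removed uniformly at random, one at a time; whenever a removal would cause the graph to have more than $x$ initial vertices or more than $y$ terminal vertices, the removal is cancelled. The process terminates when no further edge can be removed, and its result is the final graph. *)

theory Defs
  imports Main
begin

text \<open>A graph on vertex set {1..n} is represented by its edge set E :: (nat * nat) set.\<close>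

definition vertices :: "nat \<Rightarrow> nat set" where
  "vertices n = {1..n}"

definition full_edges :: "nat \<Rightarrow> (nat \<times> nat) set" where
  "full_edges n = {(a, b). a \<in> vertices n \<and> b \<in> vertices n \<and> a < b}"

definition initial_vertices :: "nat \<Rightarrow> (nat \<times> nat) set \<Rightarrow> nat set" where
  "initial_vertices n E = {v \<in> vertices n. \<not> (\<exists>u. (u, v) \<in> E)}"

definition terminal_vertices :: "nat \<Rightarrow> (nat \<times> nat) set \<Rightarrow> nat set" where
  "terminal_vertices n E = {v \<in> vertices n. \<not> (\<exists>w. (v, w) \<in> E)}"

definition task_dependency_graph :: "nat \<Rightarrow> (nat \<times> nat) set \<Rightarrow> bool" where
  "task_dependency_graph n E \<longleftrightarrow>
     E \<subseteq> vertices n \<times> vertices n \<and> acyclic E"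

definition xy_task_dependency_graph ::
  "nat \<Rightarrow> nat \<Rightarrow> nat \<Rightarrow> (nat \<times> nat) set \<Rightarrow> bool" where
  "xy_task_dependency_graph x y n E \<longleftrightarrow>
     task_dependency_graph n E \<and>
     card (initial_vertices n E) = x \<and> card (terminal_vertices n E) = y"

definition removal_allowed ::
  "nat \<Rightarrow> nat \<Rightarrow> nat \<Rightarrow> (nat \<times> nat) set \<Rightarrow> nat \<times> nat \<Rightarrow> bool" where
  "removal_allowed x y n E e \<longleftrightarrow>
     e \<in> E \<and> card (initial_vertices n (E - {e})) \<le> x
           \<and> card (terminal_vertices n (E - {e})) \<le> y"

definition removal_step ::
  "nat \<Rightarrow> nat \<Rightarrow> nat \<Rightarrow> (nat \<times> nat) set \<Rightarrow> (nat \<times> nat) set \<Rightarrow> bool" where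
  "removal_step x y n E E' \<longleftrightarrow> (\<exists>e. removal_allowed x y n E e \<and> E' = E - {e})"

definition removal_terminated :: "nat \<Rightarrow> nat \<Rightarrow> nat \<Rightarrow> (nat \<times> nat) set \<Rightarrow> bool" where
  "removal_terminated x y n E \<longleftrightarrow> \<not> (\<exists>e. removal_allowed x y n E e)"

text \<open>Possible results of the (x,y) edge-removal process on n vertices
  (every such result arises with positive probability).\<close>
definition possible_result :: "nat \<Rightarrow> nat \<Rightarrow> nat \<Rightarrow> (nat \<times> nat) set \<Rightarrow> bool" where
  "possible_result x y n E \<longleftrightarrow>
     (removal_step x y n)\<^sup>*\<^sup>* (full_edges n) E \<and> removal_terminated x y n E"

end

theory Submission
  imports Defs
begin

lemma fin_V: "finite (vertices n)" "card (vertices n) = n"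
  by (auto simp: vertices_def)

lemma init_card:
  assumes "E \<subseteq> vertices n \<times> vertices n"
  shows "card (initial_vertices n E) + card (snd ` E) = n"
proof -
  have s: "snd ` E \<subseteq> vertices n" using assms by auto
  have "initial_vertices n E = vertices n - snd ` E"
    unfolding initial_vertices_def by force
  moreover have "finite (snd ` E)" using s fin_V finite_subset by blast
  ultimately show ?thesis using s fin_V card_Diff_subset[of "snd ` E" "vertices n"]
    using card_mono[OF fin_V(1) s] by simp
qed

lemma term_card:
  assumes "E \<subseteq> vertices n \<times> vertices n"
  shows "card (terminal_vertices n E) + card (fst ` E) = n"
proof -
  have s: "fst ` E \<subseteq> vertices n" using assms by auto
  have "terminal_vertices n E = vertices n - fst ` E"
    unfolding terminal_vertices_def by force
  moreover have "finite (fst ` E)" using s fin_V finite_subset by blast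
  ultimately show ?thesis using s fin_V card_Diff_subset[of "fst ` E" "vertices n"]
    using card_mono[OF fin_V(1) s] by simp
qed

lemma finE: "E \<subseteq> vertices n \<times> vertices n \<Longrightarrow> finite E"
  using fin_V finite_subset by (metis finite_SigmaI)

lemma init_remove: "initial_vertices n (E - {(u,v)}) \<subseteq> insert v (initial_vertices n E)"
  unfolding initial_vertices_def by auto

lemma term_remove: "terminal_vertices n (E - {(u,v)}) \<subseteq> insert u (terminal_vertices n E)"
  unfolding terminal_vertices_def by auto

lemma init_remove2: "(w,v) \<in> E \<Longrightarrow> w \<noteq> u \<Longrightarrow> initial_vertices n (E - {(u,v)}) \<subseteq> initial_vertices n E"
  unfolding initial_vertices_def by auto

lemma term_remove2: "(u,w) \<in> E \<Longrightarrow> w \<noteq> v \<Longrightarrow> terminal_vertices n (E - {(u,v)}) \<subseteq> terminal_vertices n E"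
  unfolding terminal_vertices_def by auto

lemma fin_init: "finite (initial_vertices n E)"
  unfolding initial_vertices_def using fin_V by auto

lemma fin_term: "finite (terminal_vertices n E)"
  unfolding terminal_vertices_def using fin_V by auto

lemma card_ins_le: "finite A \<Longrightarrow> B \<subseteq> insert a A \<Longrightarrow> card B \<le> card A + 1"
proof -
  assume f: "finite A" and b: "B \<subseteq> insert a A"
  have "card B \<le> card (insert a A)" using f b by (simp add: card_mono)
  also have "\<dots> \<le> card A + 1" using f by (simp add: card_insert_if)
  finally show ?thesis .
qed

lemma invariant:
  assumes "(removal_step x y n)\<^sup>*\<^sup>* (full_edges n) E" "1 \<le> x" "1 \<le> y" "1 \<le> n"
  shows "E \<subseteq> full_edges n \<and> card (initial_vertices n E) \<le> x \<and> card (terminal_vertices n E) \<le> y"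
  using assms(1)
proof induction
  case base
  have "initial_vertices n (full_edges n) = {1}"
    using assms(4) unfolding initial_vertices_def full_edges_def vertices_def
    by auto
  moreover have "terminal_vertices n (full_edges n) = {n}"
    using assms(4) unfolding terminal_vertices_def full_edges_def vertices_def
    by auto
  ultimately show ?case using assms by simp
next
  case (step E1 E2)
  then show ?case unfolding removal_step_def removal_allowed_def by auto
qed

theorem mainTheorem4:
  fixes x n :: nat and E :: "(nat \<times> nat) set"
  assumes "1 \<le> x" and "x \<le> n"
    and "possible_result x x n E"
  shows "xy_task_dependency_graph x x n E"
proof -
  have reach: "(removal_step x x n)\<^sup>*\<^sup>* (full_edges n) E"
    and trm: "\<And>e. \<not> removal_allowed x x n E e"
    using assms(3) unfolding possible_result_def removal_terminated_def by auto
  have inv: "E \<subseteq> full_edges n" "card (initial_vertices n E) \<le> x"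
      "card (terminal_vertices n E) \<le> x"
    using invariant[OF reach assms(1) assms(1)] assms by auto
  have EV: "E \<subseteq> vertices n \<times> vertices n" using inv(1) unfolding full_edges_def by auto
  have fE: "finite E" using finE[OF EV] .
  have acyc: "acyclic E"
  proof -
    have "E \<subseteq> {(a,b). a < b}" using inv(1) unfolding full_edges_def by auto
    moreover have "acyclic {(a::nat,b). a < b}"
    proof -
      have "trans {(a::nat,b). a < b}" by (auto simp: trans_def)
      hence "{(a::nat,b). a < b}\<^sup>+ = {(a,b). a < b}" by (rule trancl_id)
      thus ?thesis unfolding acyclic_def by auto
    qed
    ultimately show ?thesis using acyclic_subset by blast
  qed
  have ti: "card (terminal_vertices n E) = x" if "card (initial_vertices n E) < x"
  proof (rule ccontr)
    assume "card (terminal_vertices n E) \<noteq> x"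
    hence lt: "card (terminal_vertices n E) < x" using inv by simp
    show False
    proof (cases "E = {}")
      case True
      have "card (initial_vertices n E) = n" using init_card[OF EV] True by simp
      thus False using that assms by simp
    next
      case False
      then obtain u v where uv: "(u,v) \<in> E" by auto
      have "card (initial_vertices n (E - {(u,v)})) \<le> x"
        using card_ins_le[OF fin_init init_remove, of n E u v] that by linarith
      moreover have "card (terminal_vertices n (E - {(u,v)})) \<le> x"
        using card_ins_le[OF fin_term term_remove, of n E u v] lt by linarith
      ultimately show False using trm[of "(u,v)"] uv unfolding removal_allowed_def by auto
    qed
  qed
  have I: "card (initial_vertices n E) = x"
  proof (rule ccontr)
    assume "card (initial_vertices n E) \<noteq> x"
    hence lt: "card (initial_vertices n E) < x" using inv by simp
    hence T: "card (terminal_vertices n E) = x" using ti by simp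
    have "inj_on fst E"
    proof (rule inj_onI)
      fix a b assume ab: "a \<in> E" "b \<in> E" "fst a = fst b"
      obtain u v where a: "a = (u,v)" by force
      obtain w where b: "b = (u,w)" using ab a by (metis prod.collapse fst_conv)
      show "a = b"
      proof (rule ccontr)
        assume "a \<noteq> b"
        hence "w \<noteq> v" using a b by simp
        have "card (initial_vertices n (E - {(u,v)})) \<le> x"
          using card_ins_le[OF fin_init init_remove, of n E u v] lt by linarith
        moreover have "card (terminal_vertices n (E - {(u,v)})) \<le> x"
          using card_mono[OF fin_term term_remove2[of u w E v n]] ab b \<open>w \<noteq> v\<close> T by auto
        ultimately show False using trm[of "(u,v)"] ab a unfolding removal_allowed_def by auto
      qed
    qed
    hence "card (snd ` E) \<le> card (fst ` E)"
      using card_image_le[OF fE, of snd] card_image[of fst E] by simp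
    thus False using init_card[OF EV] term_card[OF EV] T lt by simp
  qed
  have Tm: "card (terminal_vertices n E) = x"
  proof (rule ccontr)
    assume "card (terminal_vertices n E) \<noteq> x"
    hence lt: "card (terminal_vertices n E) < x" using inv by simp
    have "inj_on snd E"
    proof (rule inj_onI)
      fix a b assume ab: "a \<in> E" "b \<in> E" "snd a = snd b"
      obtain u v where a: "a = (u,v)" by force
      obtain w where b: "b = (w,v)" using ab a by (metis prod.collapse snd_conv)
      show "a = b"
      proof (rule ccontr)
        assume "a \<noteq> b"
        hence "w \<noteq> u" using a b by simp
        have "card (terminal_vertices n (E - {(u,v)})) \<le> x"
          using card_ins_le[OF fin_term term_remove, of n E u v] lt by linarith
        moreover have "card (initial_vertices n (E - {(u,v)})) \<le> x"
          using card_mono[OF fin_init init_remove2[of w v E u n]] ab b \<open>w \<noteq> u\<close> I by auto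
        ultimately show False using trm[of "(u,v)"] ab a unfolding removal_allowed_def by auto
      qed
    qed
    hence "card (fst ` E) \<le> card (snd ` E)"
      using card_image_le[OF fE, of fst] card_image[of snd E] by simp
    thus False using init_card[OF EV] term_card[OF EV] I lt by simp
  qed
  show ?thesis unfolding xy_task_dependency_graph_def task_dependency_graph_def
    using EV acyc I Tm by simp
qed

end
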